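(* Let $N\ge1$, $d\ge1$, and $\mathbf{q}=(q_1,\dots,q_N)\in(\mathbb{R}^d)^N$ with $q_i\ne q_j$ for $i\ne j$. Then for all $\gamma\in(0,1]$ and $s\ge0$, $$\sum_{i=1}^N\Big\langle\sum_{j\ne i}\frac{q_i-q_j}{|q_i-q_j|^\gamma},\sum_{k\ne i}\frac{q_i-q_k}{|q_i-q_k|^{s+1}}\Big\rangle\ge 2\sum_{1\le i<j\le N}\frac{1}{|q_i-q_j|^{s+\gamma-1}}.$$ *)

theory Defs
  imports "HOL-Analysis.Analysis"
begin

end

theory Submission
  imports Defs
begin

lemma real_key:
  fixes x y pi pk g :: real
  assumes "x > 0" "y > 0" "x \<ge> y" "pi \<ge> 0" "y * pi + x * pk \<ge> 0" "0 < g" "g \<le> 1"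
  shows "pi / x powr g + pk / y powr g \<ge> 0"
proof (cases "pk \<ge> 0")
  case True
  then show ?thesis using assms by simp
next
  case False
  have yx: "y powr (1 - g) \<le> x powr (1 - g)"
    using assms by (simp add: powr_mono2)
  have e1: "y powr (1-g) = y / y powr g" using assms by (simp add: powr_diff)
  have e2: "x powr (1-g) = x / x powr g" using assms by (simp add: powr_diff)
  have "pk \<ge> - y * pi / x" using assms by (simp add: field_simps)
  hence "pk / y powr g \<ge> (- y * pi / x) / y powr g"
    by (rule divide_right_mono) simp
  also have "(- y * pi / x) / y powr g = - (pi / x) * y powr (1-g)"
    using e1 by simp
  also have "\<dots> \<ge> - (pi / x) * x powr (1-g)"
    using divide_right_mono[OF mult_left_mono[OF yx assms(4)], of x] assms by simp
  also have "- (pi / x) * x powr (1-g) = - pi / x powr g"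
    using e2 assms by simp
  finally show ?thesis by simp
qed

lemma vec_key:
  fixes a b c :: "'v::real_inner"
  assumes "a \<noteq> b" "c \<noteq> b" "0 < g" "g \<le> 1"
  shows "(1 / norm (a - b) powr g) * ((a - b) \<bullet> (a - c))
       + (1 / norm (c - b) powr g) * ((c - b) \<bullet> (c - a)) \<ge> 0"
proof -
  define x where "x = norm (a - b)"
  define y where "y = norm (c - b)"
  define z where "z = norm (a - c)"
  define pi where "pi = (a - b) \<bullet> (a - c)"
  define pk where "pk = (c - b) \<bullet> (c - a)"
  have xp: "x > 0" using assms x_def by simp
  have yp: "y > 0" using assms y_def by simp
  have "a - c = (a - b) - (c - b)" by simp
  have nz: "z^2 = x^2 + y^2 - 2 * ((a - b) \<bullet> (c - b))"
    unfolding x_def y_def z_def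
    unfolding \<open>a - c = (a - b) - (c - b)\<close>
    by (simp add: power2_norm_eq_inner inner_diff_left inner_diff_right inner_commute)
  have hpi: "2 * pi = x^2 + z^2 - y^2"
    unfolding pi_def using nz unfolding x_def y_def z_def
    by (simp add: power2_norm_eq_inner inner_diff_left inner_diff_right inner_commute algebra_simps)
  have hpk: "2 * pk = y^2 + z^2 - x^2"
    unfolding pk_def using nz unfolding x_def y_def z_def
    by (simp add: power2_norm_eq_inner inner_diff_left inner_diff_right inner_commute algebra_simps)
  have t1: "x \<le> y + z" unfolding x_def y_def z_def
    using norm_triangle_ineq[of "a - c" "c - b"] by (simp add: norm_minus_commute add.commute)
  have t2: "y \<le> x + z" unfolding x_def y_def z_def
    using norm_triangle_ineq[of "c - a" "a - b"] by (simp add: norm_minus_commute add.commute)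
  have z0: "z \<ge> 0" unfolding z_def by simp
  have ab: "\<bar>x - y\<bar> \<le> z" using t1 t2 by linarith
  have sq: "(x - y)^2 \<le> z^2"
  proof -
    have "\<bar>x - y\<bar>^2 \<le> z^2" by (rule power_mono[OF ab]) simp
    then show ?thesis by simp
  qed
  have idt: "2 * (y * pi + x * pk) = (x + y) * (z^2 - (x - y)^2)"
  proof -
    have pie: "pi = (x^2 + z^2 - y^2)/2" using hpi by simp
    have pke: "pk = (y^2 + z^2 - x^2)/2" using hpk by simp
    show ?thesis unfolding pie pke by (simp add: field_simps power2_eq_square)
  qed
  have comb: "y * pi + x * pk \<ge> 0"
  proof -
    have "(x + y) * (z^2 - (x - y)^2) \<ge> 0" using sq xp yp by simp
    then have "0 \<le> 2 * (y * pi + x * pk)" by (subst idt)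
    then show ?thesis by simp
  qed
  have goal: "pi / x powr g + pk / y powr g \<ge> 0"
  proof (cases "x \<ge> y")
    case True
    have "y^2 \<le> x^2" using True yp by (intro power_mono) auto
    then have "pi \<ge> 0" using hpi by (smt (verit) zero_le_power2)
    then show ?thesis using real_key[OF xp yp True _ comb assms(3,4)] by simp
  next
    case False
    have "x^2 \<le> y^2" using False xp by (intro power_mono) auto
    then have "pk \<ge> 0" using hpk by (smt (verit) zero_le_power2)
    moreover have "x * pk + y * pi \<ge> 0" using comb by simp
    ultimately show ?thesis using real_key[OF yp xp _ _ _ assms(3,4), of pk pi] False by simp
  qed
  then show ?thesis unfolding x_def y_def pi_def pk_def by simp
qed

lemma sum_remove_if:
  assumes "finite I"
  shows "(\<Sum>j\<in>I - {i}. f j) = (\<Sum>j\<in>I. if j \<noteq> i then f j else 0)"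
proof -
  have "I - {i} = {j\<in>I. j \<noteq> i}" by auto
  then show ?thesis using sum.inter_filter[OF assms, of f "\<lambda>j. j \<noteq> i"] by simp
qed

lemma sum_swap3:
  fixes F :: "'a \<Rightarrow> 'a \<Rightarrow> 'a \<Rightarrow> real"
  shows "(\<Sum>i\<in>I. \<Sum>j\<in>I. \<Sum>k\<in>I. F i j k) = (\<Sum>i\<in>I. \<Sum>j\<in>I. \<Sum>k\<in>I. F k j i)"
proof -
  have "(\<Sum>i\<in>I. \<Sum>j\<in>I. \<Sum>k\<in>I. F i j k) = (\<Sum>i\<in>I. \<Sum>k\<in>I. \<Sum>j\<in>I. F i j k)"
    by (rule sum.cong[OF refl], rule sum.swap)
  also have "\<dots> = (\<Sum>k\<in>I. \<Sum>i\<in>I. \<Sum>j\<in>I. F i j k)"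
    by (rule sum.swap)
  also have "\<dots> = (\<Sum>k\<in>I. \<Sum>j\<in>I. \<Sum>i\<in>I. F i j k)"
    by (rule sum.cong[OF refl], rule sum.swap)
  finally show ?thesis .
qed

lemma pair_sum:
  fixes h :: "nat \<Rightarrow> nat \<Rightarrow> real"
  assumes sym: "\<And>i j. h i j = h j i"
  shows "(\<Sum>i\<in>{1..N}. \<Sum>j\<in>{1..N} - {i}. h i j) = 2 * (\<Sum>i\<in>{1..N}. \<Sum>j\<in>{i<..N}. h i j)"
proof -
  let ?I = "{1..N::nat}"
  have E1: "(\<Sum>i\<in>?I. \<Sum>j\<in>?I - {i}. h i j) = (\<Sum>i\<in>?I. \<Sum>j\<in>?I. (if i < j then h i j else 0) + (if j < i then h i j else 0))"
  proof (rule sum.cong[OF refl])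
    fix i assume "i \<in> ?I"
    show "(\<Sum>j\<in>?I - {i}. h i j) = (\<Sum>j\<in>?I. (if i < j then h i j else 0) + (if j < i then h i j else 0))"
      unfolding sum_remove_if[OF finite_atLeastAtMost] by (intro sum.cong refl) auto
  qed
  have E2: "(\<Sum>i\<in>?I. \<Sum>j\<in>?I. (if i < j then h i j else 0) + (if j < i then h i j else 0)) = (\<Sum>i\<in>?I. \<Sum>j\<in>?I. if i < j then h i j else 0) + (\<Sum>i\<in>?I. \<Sum>j\<in>?I. if j < i then h i j else 0)"
    by (simp add: sum.distrib)
  have B1: "(\<Sum>i\<in>?I. \<Sum>j\<in>?I. if j < i then h i j else 0) = (\<Sum>j\<in>?I. \<Sum>i\<in>?I. if j < i then h i j else 0)"
    by (rule sum.swap)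
  have B2: "(\<Sum>j\<in>?I. \<Sum>i\<in>?I. if j < i then h i j else 0) = (\<Sum>i\<in>?I. \<Sum>j\<in>?I. if i < j then h i j else 0)"
    by (rule sum.cong[OF refl], rule sum.cong[OF refl]) (use sym in auto)
  have A1: "(\<Sum>i\<in>?I. \<Sum>j\<in>?I. if i < j then h i j else 0) = (\<Sum>i\<in>?I. \<Sum>j\<in>{i<..N}. h i j)"
  proof (rule sum.cong[OF refl])
    fix i assume "i \<in> ?I"
    then have "{j\<in>?I. i < j} = {i<..N}" by auto
    then show "(\<Sum>j\<in>?I. if i < j then h i j else 0) = (\<Sum>j\<in>{i<..N}. h i j)"
      using sum.inter_filter[of ?I "h i" "\<lambda>j. i < j"] by simp
  qed
  show ?thesis using E1 E2 B1 B2 A1 by simp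
qed

theorem lemmaA1:
  fixes N :: nat and q :: "nat \<Rightarrow> real ^ 'd" and \<gamma> s :: real
  assumes "N \<ge> 1"
    and "\<And>i j. i \<in> {1..N} \<Longrightarrow> j \<in> {1..N} \<Longrightarrow> i \<noteq> j \<Longrightarrow> q i \<noteq> q j"
    and "0 < \<gamma>" and "\<gamma> \<le> 1" and "s \<ge> 0"
  shows "(\<Sum>i\<in>{1..N}.
            (\<Sum>j\<in>{1..N} - {i}. (1 / norm (q i - q j) powr \<gamma>) *\<^sub>R (q i - q j)) \<bullet>
            (\<Sum>k\<in>{1..N} - {i}. (1 / norm (q i - q k) powr (s + 1)) *\<^sub>R (q i - q k)))
         \<ge> 2 * (\<Sum>i\<in>{1..N}. \<Sum>j\<in>{i<..N}. 1 / norm (q i - q j) powr (s + \<gamma> - 1))"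
proof -
  define I where "I = {1..N}"
  define w where "w i j k = (1 / norm (q i - q j) powr \<gamma>) * (1 / norm (q i - q k) powr (s + 1)) * ((q i - q j) \<bullet> (q i - q k))" for i j k
  define h where "h i j = 1 / norm (q i - q j) powr (s + \<gamma> - 1)" for i j
  define F where "F i j k = (if i \<noteq> j \<and> k \<noteq> i \<and> k \<noteq> j then w i j k else 0)" for i j k
  have fin: "finite I" unfolding I_def by simp
  have hsym: "h i j = h j i" for i j unfolding h_def by (simp add: norm_minus_commute)
  have diag: "w i j j = h i j" if "i \<in> I" "j \<in> I" "i \<noteq> j" for i j
  proof -
    have r: "norm (q i - q j) > 0" using assms(2) that unfolding I_def by simp
    define r where "r = norm (q i - q j)"
    have rp: "r > 0" using r r_def by simp
    have "(q i - q j) \<bullet> (q i - q j) = r powr 2"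
      using rp unfolding r_def by (simp add: power2_norm_eq_inner[symmetric] powr_numeral)
    then have "w i j j = r powr 2 / (r powr \<gamma> * r powr (s + 1))"
      unfolding w_def r_def by simp
    also have "r powr \<gamma> * r powr (s + 1) = r powr (\<gamma> + (s + 1))"
      by (simp add: powr_add)
    also have "r powr 2 / r powr (\<gamma> + (s + 1)) = r powr (2 - (\<gamma> + (s + 1)))"
      by (rule powr_diff[symmetric])
    also have "2 - (\<gamma> + (s + 1)) = - (s + \<gamma> - 1)" by simp
    also have "r powr (- (s + \<gamma> - 1)) = h i j"
      unfolding h_def r_def[symmetric] powr_minus by (simp add: divide_inverse)
    finally show ?thesis .
  qed
  have expand: "(\<Sum>j\<in>I - {i}. (1 / norm (q i - q j) powr \<gamma>) *\<^sub>R (q i - q j)) \<bullet>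
            (\<Sum>k\<in>I - {i}. (1 / norm (q i - q k) powr (s + 1)) *\<^sub>R (q i - q k))
        = (\<Sum>j\<in>I - {i}. h i j) + (\<Sum>j\<in>I. \<Sum>k\<in>I. F i j k)" if "i \<in> I" for i
  proof -
    have "(\<Sum>j\<in>I - {i}. (1 / norm (q i - q j) powr \<gamma>) *\<^sub>R (q i - q j)) \<bullet>
            (\<Sum>k\<in>I - {i}. (1 / norm (q i - q k) powr (s + 1)) *\<^sub>R (q i - q k))
          = (\<Sum>j\<in>I - {i}. \<Sum>k\<in>I - {i}. w i j k)"
      unfolding inner_sum_left
      by (rule sum.cong[OF refl], unfold inner_sum_right, rule sum.cong[OF refl]) (simp add: w_def)
    also have "\<dots> = (\<Sum>j\<in>I - {i}. w i j j + (\<Sum>k\<in>I - {i} - {j}. w i j k))"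
      using fin by (intro sum.cong refl) (simp add: sum.remove)
    also have "\<dots> = (\<Sum>j\<in>I - {i}. h i j) + (\<Sum>j\<in>I - {i}. \<Sum>k\<in>I - {i} - {j}. w i j k)"
      using diag that by (simp add: sum.distrib)
    also have "(\<Sum>j\<in>I - {i}. \<Sum>k\<in>I - {i} - {j}. w i j k) = (\<Sum>j\<in>I. \<Sum>k\<in>I. F i j k)"
    proof -
      have "(\<Sum>j\<in>I - {i}. \<Sum>k\<in>I - {i} - {j}. w i j k) = (\<Sum>j\<in>I. if j \<noteq> i then (\<Sum>k\<in>I - {i} - {j}. w i j k) else 0)"
        by (rule sum_remove_if[OF fin])
      also have "\<dots> = (\<Sum>j\<in>I. \<Sum>k\<in>I. F i j k)"
      proof (intro sum.cong refl)
        fix j assume "j \<in> I"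
        have "I - {i} - {j} = {k\<in>I. k \<noteq> i \<and> k \<noteq> j}" by auto
        then have "(\<Sum>k\<in>I - {i} - {j}. w i j k) = (\<Sum>k\<in>I. if k \<noteq> i \<and> k \<noteq> j then w i j k else 0)"
          using sum.inter_filter[OF fin, of "w i j" "\<lambda>k. k \<noteq> i \<and> k \<noteq> j"] by simp
        then show "(if j \<noteq> i then (\<Sum>k\<in>I - {i} - {j}. w i j k) else 0) = (\<Sum>k\<in>I. F i j k)"
          unfolding F_def by auto
      qed
      finally show ?thesis .
    qed
    finally show ?thesis .
  qed
  have Fpos: "F i j k + F k j i \<ge> 0" if "i \<in> I" "j \<in> I" "k \<in> I" for i j k
  proof (cases "i \<noteq> j \<and> k \<noteq> i \<and> k \<noteq> j")
    case True
    have n1: "q i \<noteq> q j" "q k \<noteq> q j" using assms(2) that True unfolding I_def by auto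
    have "F i j k + F k j i = (1 / norm (q i - q k) powr (s + 1)) *
       ((1 / norm (q i - q j) powr \<gamma>) * ((q i - q j) \<bullet> (q i - q k))
       + (1 / norm (q k - q j) powr \<gamma>) * ((q k - q j) \<bullet> (q k - q i)))"
    proof -
      have nc: "norm (q k - q i) = norm (q i - q k)" by (rule norm_minus_commute)
      have "F i j k + F k j i = w i j k + w k j i" unfolding F_def using True by auto
      then show ?thesis unfolding w_def nc by (simp add: distrib_left mult.commute)
    qed
    also have "\<dots> \<ge> 0"
      using vec_key[OF n1 assms(3,4)] by simp
    finally show ?thesis .
  next
    case False
    then show ?thesis unfolding F_def by auto
  qed
  have S0: "(\<Sum>i\<in>I. \<Sum>j\<in>I. \<Sum>k\<in>I. F i j k) \<ge> 0"
  proof -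
    have "2 * (\<Sum>i\<in>I. \<Sum>j\<in>I. \<Sum>k\<in>I. F i j k)
        = (\<Sum>i\<in>I. \<Sum>j\<in>I. \<Sum>k\<in>I. F i j k) + (\<Sum>i\<in>I. \<Sum>j\<in>I. \<Sum>k\<in>I. F k j i)"
      using sum_swap3[of F I] by simp
    also have "\<dots> = (\<Sum>i\<in>I. \<Sum>j\<in>I. \<Sum>k\<in>I. F i j k + F k j i)"
      by (simp add: sum.distrib)
    also have "\<dots> \<ge> 0"
      using Fpos by (intro sum_nonneg) auto
    finally show ?thesis by simp
  qed
  have L: "(\<Sum>i\<in>I.
            (\<Sum>j\<in>I - {i}. (1 / norm (q i - q j) powr \<gamma>) *\<^sub>R (q i - q j)) \<bullet>
            (\<Sum>k\<in>I - {i}. (1 / norm (q i - q k) powr (s + 1)) *\<^sub>R (q i - q k)))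
        = (\<Sum>i\<in>I. \<Sum>j\<in>I - {i}. h i j) + (\<Sum>i\<in>I. \<Sum>j\<in>I. \<Sum>k\<in>I. F i j k)"
    using expand by (simp add: sum.distrib)
  have P2: "(\<Sum>i\<in>I. \<Sum>j\<in>I - {i}. h i j) = 2 * (\<Sum>i\<in>I. \<Sum>j\<in>{i<..N}. h i j)"
    unfolding I_def by (rule pair_sum[OF hsym])
  have main: "(\<Sum>i\<in>I.
            (\<Sum>j\<in>I - {i}. (1 / norm (q i - q j) powr \<gamma>) *\<^sub>R (q i - q j)) \<bullet>
            (\<Sum>k\<in>I - {i}. (1 / norm (q i - q k) powr (s + 1)) *\<^sub>R (q i - q k)))
        \<ge> 2 * (\<Sum>i\<in>I. \<Sum>j\<in>{i<..N}. h i j)"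
    using L P2 S0 by linarith
  then show ?thesis unfolding I_def h_def .
qed

end
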